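(* Let $N\ge 1$ and let $0=p_1<p_2<\cdots<p_N$ be integers (the sensor positions, in units of $d$). Define $$\Phi^u=\{p_{l_1}+p_{l_2}+p_{l_3}\}\cup\{p_{l_1}+p_{l_2}-p_{l_3}\}\cup\{-p_{l_1}-p_{l_2}+p_{l_3}\}\cup\{-p_{l_1}-p_{l_2}-p_{l_3}\},$$ where in each set the indices $l_1,l_2,l_3$ range independently over $\{1,2,\dots,N\}$, and $\Phi^u$ is an ordinary set (repeated values counted once). Then $$6N-5\;\le\;|\Phi^u|\;\le\;k(N):=\frac{4N^3+3N^2-N+3}{3}.$$
   Context: $\Phi^u$ is the set of virtual sensor positions of the third-order exhaustive co-array (TO-ECA) of the linear array with physical sensors at $p_1,\dots,p_N$; it is the union of the underlying sets of the four third-order co-arrays obtained from the cumulants $\mathrm{cum}\{x,x,x\}$, $\mathrm{cum}\{x,x,x^*\}$, $\mathrm{cum}\{x^*,x^*,x\}$, $\mathrm{cum}\{x^*,x^*,x^*\}$ of the received signal vector. *)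

theory Defs
  imports Complex_Main
begin

definition Phi_u :: "(nat \<Rightarrow> int) \<Rightarrow> nat \<Rightarrow> int set" where
  "Phi_u p N =
     {p l1 + p l2 + p l3 | l1 l2 l3. l1 \<in> {1..N} \<and> l2 \<in> {1..N} \<and> l3 \<in> {1..N}}
   \<union> {p l1 + p l2 - p l3 | l1 l2 l3. l1 \<in> {1..N} \<and> l2 \<in> {1..N} \<and> l3 \<in> {1..N}}
   \<union> {- p l1 - p l2 + p l3 | l1 l2 l3. l1 \<in> {1..N} \<and> l2 \<in> {1..N} \<and> l3 \<in> {1..N}}
   \<union> {- p l1 - p l2 - p l3 | l1 l2 l3. l1 \<in> {1..N} \<and> l2 \<in> {1..N} \<and> l3 \<in> {1..N}}"

end

theory Submission imports Defs begin

definition P2 :: "nat \<Rightarrow> (nat \<times> nat) set" where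
  "P2 m = {(a,b). a \<le> b \<and> b < m}"
definition P3 :: "nat \<Rightarrow> (nat \<times> nat \<times> nat) set" where
  "P3 m = {(a,b,c). a \<le> b \<and> b \<le> c \<and> c < m}"

lemma P2_fin: "finite (P2 m)"
  by (rule finite_subset[of _ "{..<m} \<times> {..<m}"]) (auto simp: P2_def)
lemma P3_fin: "finite (P3 m)"
  by (rule finite_subset[of _ "{..<m} \<times> {..<m} \<times> {..<m}"]) (auto simp: P3_def)

lemma P2_card: "2 * card (P2 m) \<le> m * (m + 1)"
proof (induction m)
  case 0 then show ?case by (simp add: P2_def)
next
  case (Suc m)
  have "P2 (Suc m) \<subseteq> P2 m \<union> (\<lambda>a. (a, m)) ` {..m}"
    by (auto simp: P2_def less_Suc_eq)
  then have "card (P2 (Suc m)) \<le> card (P2 m \<union> (\<lambda>a. (a, m)) ` {..m})"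
    by (intro card_mono) (auto simp: P2_fin)
  also have "\<dots> \<le> card (P2 m) + card ((\<lambda>a. (a, m)) ` {..m})" by (rule card_Un_le)
  also have "card ((\<lambda>a. (a, m)) ` {..m}) \<le> Suc m"
    using card_image_le[of "{..m}" "\<lambda>a. (a, m)"] by simp
  finally show ?case using Suc.IH by simp
qed

lemma P3_card: "6 * card (P3 m) \<le> m * (m + 1) * (m + 2)"
proof (induction m)
  case 0 have "P3 0 = {}" by (auto simp: P3_def)
  then show ?case by simp
next
  case (Suc m)
  have "P3 (Suc m) \<subseteq> P3 m \<union> (\<lambda>(a,b). (a, b, m)) ` P2 (Suc m)"
    by (auto simp: P3_def P2_def less_Suc_eq)
  then have "card (P3 (Suc m)) \<le> card (P3 m \<union> (\<lambda>(a,b). (a, b, m)) ` P2 (Suc m))"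
    by (intro card_mono) (auto simp: P3_fin P2_fin)
  also have "\<dots> \<le> card (P3 m) + card ((\<lambda>(a,b). (a, b, m)) ` P2 (Suc m))" by (rule card_Un_le)
  finally have h1: "card (P3 (Suc m)) \<le> card (P3 m) + card ((\<lambda>(a,b). (a, b, m)) ` P2 (Suc m))" .
  have "card ((\<lambda>(a,b). (a, b, m)) ` P2 (Suc m)) \<le> card (P2 (Suc m))"
    by (rule card_image_le[OF P2_fin])
  with h1 have "card (P3 (Suc m)) \<le> card (P3 m) + card (P2 (Suc m))" by linarith
  then have "6 * card (P3 (Suc m)) \<le> 6 * card (P3 m) + 3 * (2 * card (P2 (Suc m)))" by simp
  also have "\<dots> \<le> m * (m + 1) * (m + 2) + 3 * (Suc m * (Suc m + 1))"
    using Suc.IH P2_card[of "Suc m"] by linarith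
  also have "\<dots> = Suc m * (Suc m + 1) * (Suc m + 2)" by (simp add: algebra_simps)
  finally show ?case .
qed

lemma sort2:
  fixes f :: "nat \<Rightarrow> int"
  assumes "s \<le> i" "s \<le> j" "i < s + m" "j < s + m"
  shows "\<exists>a b. (a,b) \<in> P2 m \<and> f i + f j = f (a + s) + f (b + s)"
proof (cases "i \<le> j")
  case True
  then show ?thesis using assms by (intro exI[of _ "i - s"] exI[of _ "j - s"]) (auto simp: P2_def)
next
  case False
  then show ?thesis using assms by (intro exI[of _ "j - s"] exI[of _ "i - s"]) (auto simp: P2_def)
qed

lemma sort3:
  fixes f :: "nat \<Rightarrow> int"
  assumes "s \<le> i" "s \<le> j" "s \<le> k" "i < s + m" "j < s + m" "k < s + m"
  shows "\<exists>a b c. (a,b,c) \<in> P3 m \<and> f i + f j + f k = f (a + s) + f (b + s) + f (c + s)"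
proof -
  have key: "\<exists>a b c. (a,b,c) \<in> P3 m \<and> f x + f y + f z = f (a + s) + f (b + s) + f (c + s)"
    if "x \<le> y" "y \<le> z" "s \<le> x" "z < s + m" and perm: "f i + f j + f k = f x + f y + f z" for x y z
    using that by (intro exI[of _ "x - s"] exI[of _ "y - s"] exI[of _ "z - s"]) (auto simp: P3_def)
  have "\<exists>x y z. x \<le> y \<and> y \<le> z \<and> s \<le> x \<and> z < s + m \<and> f i + f j + f k = f x + f y + f z"
  proof -
    consider "i \<le> j" "j \<le> k" | "i \<le> k" "k \<le> j" | "j \<le> i" "i \<le> k" | "j \<le> k" "k \<le> i"
      | "k \<le> i" "i \<le> j" | "k \<le> j" "j \<le> i" by linarith
    then show ?thesis
    proof cases
      case 1 then show ?thesis using assms by (intro exI[of _ i] exI[of _ j] exI[of _ k]) auto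
    next
      case 2 then show ?thesis using assms by (intro exI[of _ i] exI[of _ k] exI[of _ j]) auto
    next
      case 3 then show ?thesis using assms by (intro exI[of _ j] exI[of _ i] exI[of _ k]) auto
    next
      case 4 then show ?thesis using assms by (intro exI[of _ j] exI[of _ k] exI[of _ i]) auto
    next
      case 5 then show ?thesis using assms by (intro exI[of _ k] exI[of _ i] exI[of _ j]) auto
    next
      case 6 then show ?thesis using assms by (intro exI[of _ k] exI[of _ j] exI[of _ i]) auto
    qed
  qed
  then obtain x y z where "x \<le> y \<and> y \<le> z \<and> s \<le> x \<and> z < s + m \<and> f i + f j + f k = f x + f y + f z"
    by blast
  then obtain a b c where "(a,b,c) \<in> P3 m" "f x + f y + f z = f (a + s) + f (b + s) + f (c + s)"
    using key by blast
  then show ?thesis using \<open>x \<le> y \<and> y \<le> z \<and> s \<le> x \<and> z < s + m \<and> f i + f j + f k = f x + f y + f z\<close>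
    by metis
qed


lemma Phi_memA:
  assumes "l1 \<in> {1..N}" "l2 \<in> {1..N}" "l3 \<in> {1..N}"
  shows "p l1 + p l2 + p l3 \<in> Phi_u p N" "- p l1 - p l2 - p l3 \<in> Phi_u p N"
  using assms unfolding Phi_u_def by blast+

lemma Phi_sub:
  fixes p :: "nat \<Rightarrow> int" and N :: nat
  assumes "N \<ge> 1" and p1: "p 1 = 0"
  defines "X1 \<equiv> (\<lambda>((a,b),c). p(a+1)+p(b+1)-p(c+1)) ` (P2 N \<times> {..<N})"
    and "X2 \<equiv> (\<lambda>((a,b),c). -p(a+2)-p(b+2)+p(c+1)) ` (P2 (N-1) \<times> {..<N})"
    and "X3 \<equiv> (\<lambda>(a,b,c). p(a+2)+p(b+2)+p(c+2)) ` P3 (N-1)"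
    and "X4 \<equiv> (\<lambda>(a,b,c). -p(a+2)-p(b+2)-p(c+2)) ` P3 (N-1)"
  shows "Phi_u p N \<subseteq> X1 \<union> X2 \<union> X3 \<union> X4"
proof
  fix x assume "x \<in> Phi_u p N"
  have inX1: "p i + p j - p k \<in> X1" if ijk: "i \<in> {1..N}" "j \<in> {1..N}" "k \<in> {1..N}" for i j k
  proof -
    obtain a b where ab: "(a,b) \<in> P2 N" "p i + p j = p (a+1) + p (b+1)"
      using sort2[of 1 i j N p] ijk by auto
    have "k - 1 \<in> {..<N}" "k - 1 + 1 = k" using ijk by auto
    then show ?thesis unfolding X1_def using ab
      by (intro image_eqI[of _ _ "((a,b),k-1)"]) auto
  qed
  have inX2: "- p i - p j + p k \<in> X2" if ijk: "i \<in> {2..N}" "j \<in> {2..N}" "k \<in> {1..N}" for i j k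
  proof -
    obtain a b where ab: "(a,b) \<in> P2 (N-1)" "p i + p j = p (a+2) + p (b+2)"
      using sort2[of 2 i j "N-1" p] ijk by auto
    have "k - 1 \<in> {..<N}" "k - 1 + 1 = k" using ijk by auto
    then show ?thesis unfolding X2_def using ab
      by (intro image_eqI[of _ _ "((a,b),k-1)"]) auto
  qed
  have inX3: "p i + p j + p k \<in> X3 \<and> - p i - p j - p k \<in> X4"
    if ijk: "i \<in> {2..N}" "j \<in> {2..N}" "k \<in> {2..N}" for i j k
  proof -
    obtain a b c where abc: "(a,b,c) \<in> P3 (N-1)" "p i + p j + p k = p (a+2) + p (b+2) + p (c+2)"
      using sort3[of 2 i j k "N-1" p] ijk by auto
    have e: "- p i - p j - p k = - p (a+2) - p (b+2) - p (c+2)" using abc(2) by linarith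
    show ?thesis unfolding X3_def X4_def using abc e
      by (auto intro!: image_eqI[of _ _ "(a,b,c)"])
  qed
  have one: "l \<in> {1..N} \<Longrightarrow> l \<noteq> 1 \<Longrightarrow> l \<in> {2..N}" for l by auto
  have oneN: "1 \<in> {1..N}" using assms by auto
  from \<open>x \<in> Phi_u p N\<close> consider
      (A) l1 l2 l3 where "l1 \<in> {1..N}" "l2 \<in> {1..N}" "l3 \<in> {1..N}" "x = p l1 + p l2 + p l3"
    | (B) l1 l2 l3 where "l1 \<in> {1..N}" "l2 \<in> {1..N}" "l3 \<in> {1..N}" "x = p l1 + p l2 - p l3"
    | (C) l1 l2 l3 where "l1 \<in> {1..N}" "l2 \<in> {1..N}" "l3 \<in> {1..N}" "x = - p l1 - p l2 + p l3"
    | (D) l1 l2 l3 where "l1 \<in> {1..N}" "l2 \<in> {1..N}" "l3 \<in> {1..N}" "x = - p l1 - p l2 - p l3"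
    unfolding Phi_u_def by blast
  then show "x \<in> X1 \<union> X2 \<union> X3 \<union> X4"
  proof cases
    case A
    show ?thesis
    proof (cases "l1 = 1 \<or> l2 = 1 \<or> l3 = 1")
      case True
      then show ?thesis
      proof (elim disjE)
        assume "l1 = 1" then show ?thesis using inX1[of l2 l3 1] A p1 oneN by auto
      next
        assume "l2 = 1" then show ?thesis using inX1[of l1 l3 1] A p1 oneN by auto
      next
        assume "l3 = 1" then show ?thesis using inX1[of l1 l2 1] A p1 oneN by auto
      qed
    next
      case False then show ?thesis using inX3[of l1 l2 l3] A one by auto
    qed
  next
    case B then show ?thesis using inX1[of l1 l2 l3] by auto
  next
    case C
    show ?thesis
    proof (cases "l1 = 1 \<or> l2 = 1")
      case True
      then show ?thesis
      proof (elim disjE)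
        assume "l1 = 1" then show ?thesis using inX1[of l3 1 l2] C p1 oneN by auto
      next
        assume "l2 = 1" then show ?thesis using inX1[of l3 1 l1] C p1 oneN by auto
      qed
    next
      case False then show ?thesis using inX2[of l1 l2 l3] C one by auto
    qed
  next
    case D
    show ?thesis
    proof (cases "l1 = 1 \<or> l2 = 1 \<or> l3 = 1")
      case True
      have g: "- p i - p j \<in> X1 \<union> X2 \<union> X3 \<union> X4" if "i \<in> {1..N}" "j \<in> {1..N}" for i j
      proof (cases "i = 1 \<or> j = 1")
        case True
        then show ?thesis
        proof (elim disjE)
          assume "i = 1" then show ?thesis using inX1[of 1 1 j] that p1 oneN by auto
        next
          assume "j = 1" then show ?thesis using inX1[of 1 1 i] that p1 oneN by auto
        qed
      next
        case False then show ?thesis using inX2[of i j 1] that one oneN p1 by auto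
      qed
      from True show ?thesis
      proof (elim disjE)
        assume "l1 = 1" then show ?thesis using g[of l2 l3] D p1 by auto
      next
        assume "l2 = 1" then show ?thesis using g[of l1 l3] D p1 by auto
      next
        assume "l3 = 1" then show ?thesis using g[of l1 l2] D p1 by auto
      qed
    next
      case False then show ?thesis using inX3[of l1 l2 l3] D one by auto
    qed
  qed
qed


lemma lowerb:
  fixes p :: "nat \<Rightarrow> int" and N :: nat
  assumes N1: "N \<ge> 1"
    and p1: "p 1 = 0"
    and sm: "strict_mono_on {1..N} p"
    and finPhi: "finite (Phi_u p N)"
  shows "6 * N - 5 \<le> card (Phi_u p N)"
proof -
  have inj: "inj_on p {1..N}" using sm by (rule strict_mono_on_imp_inj_on)
  have pge: "0 \<le> p k" "p k \<le> p N" if "k \<in> {1..N}" for k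
    using that strict_mono_on_less_eq[OF sm, of 1 k] strict_mono_on_less_eq[OF sm, of k N] p1 N1 by auto
  have plt: "p k < p N" if "k \<in> {1..<N}" for k
    using that strict_mono_on_less[OF sm, of k N] N1 by auto
  define L1 where "L1 = p ` {1..<N}"
  define L2 where "L2 = (\<lambda>k. p N + p k) ` {1..<N}"
  define L3 where "L3 = (\<lambda>k. 2 * p N + p k) ` {1..N}"
  define L where "L = L1 \<union> L2 \<union> L3"
  have cL1: "card L1 = N - 1" unfolding L1_def
    by (subst card_image) (auto intro: inj_on_subset[OF inj])
  have cL2: "card L2 = N - 1" unfolding L2_def
    by (subst card_image) (auto simp: inj_on_def dest: inj_onD[OF inj])
  have cL3: "card L3 = N" unfolding L3_def
    by (subst card_image) (auto simp: inj_on_def dest: inj_onD[OF inj])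
  have L1b: "x \<in> L1 \<Longrightarrow> 0 \<le> x \<and> x < p N" for x unfolding L1_def using pge plt by auto
  have L2b: "x \<in> L2 \<Longrightarrow> p N \<le> x \<and> x < 2 * p N" for x unfolding L2_def using pge plt by auto
  have L3b: "x \<in> L3 \<Longrightarrow> 2 * p N \<le> x" for x unfolding L3_def using pge by auto
  have d12: "L1 \<inter> L2 = {}" using L1b L2b by fastforce
  have d3: "(L1 \<union> L2) \<inter> L3 = {}" using L1b L2b L3b by fastforce
  have fL: "finite L1" "finite L2" "finite L3" unfolding L1_def L2_def L3_def by auto
  have cL: "card L = 3 * N - 2"
  proof -
    have "card L = card (L1 \<union> L2) + card L3" unfolding L_def
      using fL d3 by (intro card_Un_disjoint) auto
    also have "card (L1 \<union> L2) = card L1 + card L2" using fL d12 by (intro card_Un_disjoint) auto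
    finally show ?thesis using cL1 cL2 cL3 N1 by simp
  qed
  have fL': "finite L" unfolding L_def using fL by auto
  have Lrep: "\<exists>l1 l2 l3. l1 \<in> {1..N} \<and> l2 \<in> {1..N} \<and> l3 \<in> {1..N} \<and> x = p l1 + p l2 + p l3"
    if "x \<in> L" for x
  proof -
    have one: "1 \<in> {1..N}" "N \<in> {1..N}" using N1 by auto
    from that consider (a) k where "k \<in> {1..<N}" "x = p k" | (b) k where "k \<in> {1..<N}" "x = p N + p k"
      | (c) k where "k \<in> {1..N}" "x = 2 * p N + p k"
      unfolding L_def L1_def L2_def L3_def by blast
    then show ?thesis
    proof cases
      case a then show ?thesis using one p1 by (intro exI[of _ k] exI[of _ 1] exI[of _ 1]) auto
    next
      case b then show ?thesis using one p1 by (intro exI[of _ k] exI[of _ N] exI[of _ 1]) auto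
    next
      case c then show ?thesis using one p1 by (intro exI[of _ k] exI[of _ N] exI[of _ N]) auto
    qed
  qed
  define Mn where "Mn = uminus ` L"
  have LP: "L \<subseteq> Phi_u p N" using Lrep Phi_memA(1) by blast
  have MP: "Mn \<subseteq> Phi_u p N"
  proof
    fix y assume "y \<in> Mn"
    then obtain x where "x \<in> L" "y = - x" unfolding Mn_def by auto
    then obtain l1 l2 l3 where "l1 \<in> {1..N} \<and> l2 \<in> {1..N} \<and> l3 \<in> {1..N} \<and> x = p l1 + p l2 + p l3"
      using Lrep by blast
    then show "y \<in> Phi_u p N" using Phi_memA(2)[of l1 N l2 l3 p] \<open>y = - x\<close> by auto
  qed
  have cM: "card Mn = 3 * N - 2" unfolding Mn_def using cL by (simp add: card_image)
  have Lnn: "x \<in> L \<Longrightarrow> 0 \<le> x" for x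
    unfolding L_def using L1b L2b L3b pge[of N] N1 by force
  have zL: "0 \<in> L"
  proof (cases "N = 1")
    case True then have "0 = 2 * p N + p 1" using p1 by simp
    then show ?thesis unfolding L_def L3_def using N1 by (intro UnI2 image_eqI[of _ _ 1]) auto
  next
    case False then have "1 \<in> {1..<N}" using N1 by auto
    then show ?thesis unfolding L_def L1_def using p1 by force
  qed
  have LM: "L \<inter> Mn = {0}"
  proof
    show "L \<inter> Mn \<subseteq> {0}"
    proof
      fix y assume "y \<in> L \<inter> Mn"
      then obtain x where "x \<in> L" "y = - x" "y \<in> L" unfolding Mn_def by auto
      then show "y \<in> {0}" using Lnn[of x] Lnn[of y] by auto
    qed
    show "{0} \<subseteq> L \<inter> Mn" using zL unfolding Mn_def by (auto intro: image_eqI[of _ _ 0])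
  qed
  have fM: "finite Mn" unfolding Mn_def using fL' by auto
  have "card L + card Mn = card (L \<union> Mn) + card (L \<inter> Mn)"
    using fL' fM by (rule card_Un_Int)
  then have "card (L \<union> Mn) = 6 * N - 5" using cL cM LM N1 by simp
  moreover have "card (L \<union> Mn) \<le> card (Phi_u p N)"
    using LP MP finPhi by (intro card_mono) auto
  ultimately show ?thesis by simp
qed

theorem theorem1:
  fixes p :: "nat \<Rightarrow> int" and N :: nat
  assumes "N \<ge> 1"
    and "p 1 = 0"
    and "strict_mono_on {1..N} p"
  shows "6 * real N - 5 \<le> real (card (Phi_u p N))
         \<and> real (card (Phi_u p N)) \<le> (4 * real N ^ 3 + 3 * real N ^ 2 - real N + 3) / 3"
proof -
  note N1 = assms(1) and p1 = assms(2) and sm = assms(3)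
  define X1 where "X1 = (\<lambda>((a,b),c). p(a+1)+p(b+1)-p(c+1)) ` (P2 N \<times> {..<N})"
  define X2 where "X2 = (\<lambda>((a,b),c). -p(a+2)-p(b+2)+p(c+1)) ` (P2 (N-1) \<times> {..<N})"
  define X3 where "X3 = (\<lambda>(a,b,c). p(a+2)+p(b+2)+p(c+2)) ` P3 (N-1)"
  define X4 where "X4 = (\<lambda>(a,b,c). -p(a+2)-p(b+2)-p(c+2)) ` P3 (N-1)"
  have sub: "Phi_u p N \<subseteq> X1 \<union> X2 \<union> X3 \<union> X4"
    using Phi_sub[of N p, OF N1 p1] unfolding X1_def X2_def X3_def X4_def by blast
  have fX: "finite X1" "finite X2" "finite X3" "finite X4"
    unfolding X1_def X2_def X3_def X4_def by (auto intro!: finite_imageI simp: P2_fin P3_fin)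
  have finPhi: "finite (Phi_u p N)" using sub fX finite_subset by blast
  have c1: "card X1 \<le> card (P2 N) * N"
    unfolding X1_def using card_image_le[of "P2 N \<times> {..<N}"] P2_fin by (simp add: card_cartesian_product)
  have c2: "card X2 \<le> card (P2 (N-1)) * N"
    unfolding X2_def using card_image_le[of "P2 (N-1) \<times> {..<N}"] P2_fin by (simp add: card_cartesian_product)
  have c3: "card X3 \<le> card (P3 (N-1))" "card X4 \<le> card (P3 (N-1))"
    unfolding X3_def X4_def using card_image_le P3_fin by auto
  have "card (Phi_u p N) \<le> card (X1 \<union> X2 \<union> X3 \<union> X4)"
    using sub fX by (intro card_mono) auto
  also have "\<dots> \<le> card X1 + card X2 + card X3 + card X4"
    by (meson card_Un_le add_mono le_trans order_refl)
  finally have cPhi: "card (Phi_u p N) \<le> card X1 + card X2 + card X3 + card X4" .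
  obtain M where M: "N = Suc M" using N1 by (cases N) auto
  have q2: "2 * card (P2 N) \<le> N * (N + 1)" "2 * card (P2 M) \<le> M * (M + 1)"
    "6 * card (P3 M) \<le> M * (M + 1) * (M + 2)"
    using P2_card P3_card by auto
  have "6 * card (Phi_u p N) \<le> 3 * (2 * card (P2 N)) * N + 3 * (2 * card (P2 M)) * N + 2 * (6 * card (P3 M))"
    using cPhi c1 c2 c3 M by simp
  also have "\<dots> \<le> 3 * (N * (N + 1)) * N + 3 * (M * (M + 1)) * N + 2 * (M * (M + 1) * (M + 2))"
  proof -
    have "3 * (2 * card (P2 N)) * N \<le> 3 * (N * (N + 1)) * N"
      using q2(1) by (intro mult_right_mono) auto
    moreover have "3 * (2 * card (P2 M)) * N \<le> 3 * (M * (M + 1)) * N"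
      using q2(2) by (intro mult_right_mono) auto
    ultimately show ?thesis using q2(3) by linarith
  qed
  finally have n1: "6 * card (Phi_u p N) \<le> 3 * (N * (N + 1)) * N + 3 * (M * (M + 1)) * N + 2 * (M * (M + 1) * (M + 2))" .
  have n2: "3 * (N * (N + 1)) * N + 3 * (M * (M + 1)) * N + 2 * (M * (M + 1) * (M + 2)) + 2 * N = 8 * N ^ 3"
    unfolding M by (simp add: algebra_simps power3_eq_cube)
  have "6 * card (Phi_u p N) + 2 * N \<le> 8 * N ^ 3" using n1 n2 by linarith
  then have "real (6 * card (Phi_u p N) + 2 * N) \<le> real (8 * N ^ 3)" by (rule of_nat_mono)
  then have up: "6 * real (card (Phi_u p N)) + 2 * real N \<le> 8 * real N ^ 3" by simp
  have upper: "real (card (Phi_u p N)) \<le> (4 * real N ^ 3 + 3 * real N ^ 2 - real N + 3) / 3"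
  proof -
    have "real (card (Phi_u p N)) * 3 \<le> 4 * real N ^ 3 + 3 * real N ^ 2 - real N + 3"
      using up zero_le_power2[of "real N"] by linarith
    then show ?thesis by (subst pos_le_divide_eq) auto
  qed
  have "6 * N - 5 \<le> card (Phi_u p N)" using lowerb[OF N1 p1 sm finPhi] .
  then have lower: "6 * real N - 5 \<le> real (card (Phi_u p N))" using N1 by linarith
  show ?thesis using lower upper by simp
qed
end
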